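(* Suppose the collision kernel satisfies the Assumption stated in the context with $\eta\ge\frac32$. Let $0\le f_0\in L^1(\mathbb R_{\ge0})$ have finite mass and energy, and let $f\in C([0,\infty);L^1(\mathbb R_{\ge0}))$ be the unique conservative mild solution on $[0,\infty)$ with $f(\cdot,0)=f_0$. Suppose in addition $f_0\in L^\infty(\mathbb R_{\ge0})$. Then $f(\cdot,t)\in L^\infty(\mathbb R_{\ge0})$ for all $t\ge0$ and $$\|f(t)\|_{L^\infty}\le(1+\|f_0\|_{L^\infty})\exp\Big(8b_0^2\int_0^t\|f(\tau)\|_{L^1}^2\,d\tau\Big)\qquad\forall\,t\ge0.$$
   Context: Norms: $\|f(t)\|_{L^1}=\int_0^\infty|f(x,t)|\,dx$, $\|f(t)\|_{L^\infty}$ the essential supremum in $x$. Kernel. $\hat\phi:[0,\infty)\to\mathbb R$ continuous bounded, $\Phi(r,\rho)=(\hat\phi(r)+\hat\phi(\rho))^2$, $x_*=(y+z-x)_+$. If $x_*xyz>0$, $W(x,y,z)=\frac{1}{4\pi\sqrt{xyz}}\int_{|\sqrt x-\sqrt y|\vee|\sqrt{x_*}-\sqrt z|}^{(\sqrt x+\sqrt y)\wedge(\sqrt{x_*}+\sqrt z)}ds\int_0^{2\pi}\Phi(\sqrt2 s,\sqrt2 Y_* )d\theta$ with $Y_*=\big|\sqrt{(z-\frac{(x-y+s^2)^2}{4s^2})_+}+e^{i\theta}\sqrt{(x-\frac{(x-y+s^2)^2}{4s^2})_+}\big|$ ($s>0$), $Y_*=0$ ($s=0$). Otherwise $W(0,y,z)=\Phi(\sqrt{2y},\sqrt{2z})/\sqrt{yz}$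 ($y,z>0$), $W(x,0,z)=\Phi(\sqrt{2x},\sqrt{2(z-x)})/\sqrt{xz}$ ($z>x>0$), $W(x,y,0)=\Phi(\sqrt{2(y-x)},\sqrt{2x})/\sqrt{xy}$ ($y>x>0$), $W=0$ otherwise. Mild solutions. With $f=f(x)$, $f_*=f(x_* )$, $f'=f(y)$, $f_*'=f(z)$, $Q(f)(x)=\int_{\mathbb R_{\ge0}^2}W(x,y,z)[f'f_*'(1+f+f_* )-ff_*(1+f'+f_*')]\sqrt y\sqrt z\,dy\,dz$. A nonnegative measurable $f$ on $\mathbb R_{\ge0}\times[0,\infty)$ is a mild solution on $[0,\infty)$ if (i) $\sup_{t\in[0,T]}\int(1+x)f(x,t)\sqrt x\,dx<\infty$ for all $T>0$; (ii) there is a null set $Z$ independent of $t$ such that for $x\notin Z$, $t\ge0$: $\int_0^td\tau\int W[f'f_*'(1+f+f_* )+ff_*(1+f'+f_*')]\sqrt y\sqrt z\,dy\,dz<\infty$ and $f(x,t)=f(x,0)+\int_0^tQ(f)(x,\tau)d\tau$. Conservative: $\int f\sqrt x\,dx$ and $\int xf\sqrt x\,dx$ constant in $t$. Assumption. $\hat\phi$ continuous on $[0,\infty)$; constants $b_0>0,\eta\ge1$ with $0\le\hat\phi(r)\le b_0\frac{r^\eta}{1+r^\eta}$ for all $r\ge0$; there is $k\in C^1([1,\sqrt2])$, $k(1)=1$, with $\hat\phi(ar)\le k(a)\hat\phi(r)$ for all $r>0$, $1<a\le\sqrt2$. *)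

theory Defs
  imports "HOL-Analysis.Analysis" "HOL-Probability.Essential_Supremum"
begin

text \<open>Functions of (x,t) are modelled as f :: real => real => real, f x t,
  only values with x >= 0, t >= 0 matter.\<close>

definition Phi :: "(real \<Rightarrow> real) \<Rightarrow> real \<Rightarrow> real \<Rightarrow> real" where
  "Phi ph r \<rho> = (ph r + ph \<rho>)^2"

definition xstar :: "real \<Rightarrow> real \<Rightarrow> real \<Rightarrow> real" where
  "xstar x y z = max (y + z - x) 0"

definition Ystar :: "real \<Rightarrow> real \<Rightarrow> real \<Rightarrow> real \<Rightarrow> real \<Rightarrow> real" where
  "Ystar x y z s \<theta> =
     (if s > 0 then
        (let A = (x - y + s^2)^2 / (4 * s^2) in
         cmod (complex_of_real (sqrt (max (z - A) 0))
               + cis \<theta> * complex_of_real (sqrt (max (x - A) 0))))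
      else 0)"

definition W :: "(real \<Rightarrow> real) \<Rightarrow> real \<Rightarrow> real \<Rightarrow> real \<Rightarrow> real" where
  "W ph x y z =
     (if xstar x y z * x * y * z > 0 then
        1 / (4 * pi * sqrt (x * y * z)) *
        (LINT s:{max \<bar>sqrt x - sqrt y\<bar> \<bar>sqrt (xstar x y z) - sqrt z\<bar> ..
                  min (sqrt x + sqrt y) (sqrt (xstar x y z) + sqrt z)}|lborel.
           (LINT \<theta>:{0..2*pi}|lborel. Phi ph (sqrt 2 * s) (sqrt 2 * Ystar x y z s \<theta>)))
      else if x = 0 \<and> y > 0 \<and> z > 0 then
        Phi ph (sqrt (2*y)) (sqrt (2*z)) / sqrt (y * z)
      else if y = 0 \<and> z > x \<and> x > 0 then
        Phi ph (sqrt (2*x)) (sqrt (2*(z - x))) / sqrt (x * z)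
      else if z = 0 \<and> y > x \<and> x > 0 then
        Phi ph (sqrt (2*(y - x))) (sqrt (2*x)) / sqrt (x * y)
      else 0)"

definition gain :: "(real \<Rightarrow> real \<Rightarrow> real) \<Rightarrow> real \<Rightarrow> real \<Rightarrow> real \<Rightarrow> real \<Rightarrow> real" where
  "gain f x y z t = f y t * f z t * (1 + f x t + f (xstar x y z) t)"

definition loss :: "(real \<Rightarrow> real \<Rightarrow> real) \<Rightarrow> real \<Rightarrow> real \<Rightarrow> real \<Rightarrow> real \<Rightarrow> real" where
  "loss f x y z t = f x t * f (xstar x y z) t * (1 + f y t + f z t)"

definition Qcoll :: "(real \<Rightarrow> real) \<Rightarrow> (real \<Rightarrow> real \<Rightarrow> real) \<Rightarrow> real \<Rightarrow> real \<Rightarrow> real" where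
  "Qcoll ph f x t =
     (LINT p:{0..}\<times>{0..}|(lborel \<Otimes>\<^sub>M lborel).
        W ph x (fst p) (snd p) * (gain f x (fst p) (snd p) t - loss f x (fst p) (snd p) t)
          * sqrt (fst p) * sqrt (snd p))"

definition mild_solution :: "(real \<Rightarrow> real) \<Rightarrow> (real \<Rightarrow> real \<Rightarrow> real) \<Rightarrow> bool" where
  "mild_solution ph f \<longleftrightarrow>
     (\<forall>x\<ge>0. \<forall>t\<ge>0. f x t \<ge> 0) \<and>
     (\<lambda>p. f (fst p) (snd p)) \<in> borel_measurable (lborel :: (real \<times> real) measure) \<and>
     (\<forall>T>0. \<exists>C::real. \<forall>t\<in>{0..T}.
        (\<integral>\<^sup>+ x\<in>{0..}. ennreal ((1 + x) * f x t * sqrt x) \<partial>lborel) \<le> ennreal C) \<and>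
     (\<exists>Z. Z \<in> null_sets lborel \<and>
        (\<forall>x\<in>{0..} - Z. \<forall>t\<ge>0.
           (\<integral>\<^sup>+ \<tau>\<in>{0..t}.
              (\<integral>\<^sup>+ p\<in>{0..}\<times>{0..}.
                 ennreal (W ph x (fst p) (snd p) *
                          (gain f x (fst p) (snd p) \<tau> + loss f x (fst p) (snd p) \<tau>)
                          * sqrt (fst p) * sqrt (snd p)) \<partial>(lborel \<Otimes>\<^sub>M lborel)) \<partial>lborel) < \<infinity>
           \<and> f x t = f x 0 + (LINT \<tau>:{0..t}|lborel. Qcoll ph f x \<tau>)))"

definition mass :: "(real \<Rightarrow> real) \<Rightarrow> real" where
  "mass g = (LINT x:{0..}|lborel. g x * sqrt x)"

definition energy :: "(real \<Rightarrow> real) \<Rightarrow> real" where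
  "energy g = (LINT x:{0..}|lborel. x * g x * sqrt x)"

definition conservative :: "(real \<Rightarrow> real \<Rightarrow> real) \<Rightarrow> bool" where
  "conservative f \<longleftrightarrow>
     (\<forall>t\<ge>0. mass (\<lambda>x. f x t) = mass (\<lambda>x. f x 0) \<and> energy (\<lambda>x. f x t) = energy (\<lambda>x. f x 0))"

definition L1norm :: "(real \<Rightarrow> real) \<Rightarrow> real" where
  "L1norm g = (LINT x:{0..}|lborel. \<bar>g x\<bar>)"

definition Linfnorm :: "(real \<Rightarrow> real) \<Rightarrow> ereal" where
  "Linfnorm g = esssup (restrict_space lborel {0..}) (\<lambda>x. ereal \<bar>g x\<bar>)"

definition C_L1 :: "(real \<Rightarrow> real \<Rightarrow> real) \<Rightarrow> bool" where
  "C_L1 f \<longleftrightarrow>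
     (\<forall>t\<ge>0. set_integrable lborel {0..} (\<lambda>x. f x t)) \<and>
     (\<forall>t\<ge>0. ((\<lambda>s. LINT x:{0..}|lborel. \<bar>f x s - f x t\<bar>) \<longlongrightarrow> 0) (at t within {0..}))"

definition kernel_assumption :: "(real \<Rightarrow> real) \<Rightarrow> real \<Rightarrow> real \<Rightarrow> bool" where
  "kernel_assumption ph b0 \<eta> \<longleftrightarrow>
     continuous_on {0..} ph \<and> b0 > 0 \<and> \<eta> \<ge> 1 \<and>
     (\<forall>r\<ge>0. 0 \<le> ph r \<and> ph r \<le> b0 * r powr \<eta> / (1 + r powr \<eta>)) \<and>
     (\<exists>k k'. k 1 = 1 \<and> continuous_on {1..sqrt 2} k' \<and>
        (\<forall>a\<in>{1..sqrt 2}. (k has_real_derivative k' a) (at a within {1..sqrt 2})) \<and>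
        (\<forall>r>0. \<forall>a\<in>{1<..sqrt 2}. ph (a * r) \<le> k a * ph r))"

end

theory Submission
  imports Defs
begin
lemma set_lint_interval_bound:
  fixes g :: "real \<Rightarrow> real"
  assumes "\<And>x. x \<in> {a..b} \<Longrightarrow> 0 \<le> g x \<and> g x \<le> c"
  shows "0 \<le> (LINT x:{a..b}|lborel. g x) \<and> (LINT x:{a..b}|lborel. g x) \<le> c * max (b - a) 0"
proof -
  have c0: "a \<le> b \<Longrightarrow> 0 \<le> c" using assms[of a] by auto
  have nn: "0 \<le> (LINT x:{a..b}|lborel. g x)"
    unfolding set_lebesgue_integral_def
    by (rule integral_nonneg_AE) (use assms in \<open>auto simp: indicator_def\<close>)
  moreover have "(LINT x:{a..b}|lborel. g x) \<le> c * max (b - a) 0"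
  proof (cases "set_integrable lborel {a..b} g")
    case True
    show ?thesis
    proof (cases "a \<le> b")
      case ab: True
      have ii: "integrable lborel (indicat_real {a..b})" by (rule integrable_real_indicator) (auto simp: emeasure_lborel_Icc_eq)
      have "(LINT x:{a..b}|lborel. g x) \<le> (LINT x:{a..b}|lborel. c)"
        apply (rule set_integral_mono[OF True])
        using assms ii by (auto simp: set_integrable_def)
      also have "\<dots> = c * (b - a)" using ab ii by (simp add: set_lebesgue_integral_def measure_def emeasure_lborel_Icc_eq mult.commute)
      finally show ?thesis using ab by simp
    next
      case False then show ?thesis by (simp add: set_lebesgue_integral_def)
    qed
  next
    case False
    then have "(LINT x:{a..b}|lborel. g x) = 0"
      by (simp add: set_lebesgue_integral_def set_integrable_def not_integrable_integral_eq)
    then show ?thesis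
      by (cases "a \<le> b") (auto intro!: mult_nonneg_nonneg c0)
  qed
  ultimately show ?thesis by blast
qed

lemma ph_bound:
  assumes "kernel_assumption ph b0 \<eta>" "r \<ge> 0"
  shows "0 \<le> ph r \<and> ph r \<le> b0"
proof -
  have b0: "b0 > 0" and h: "0 \<le> ph r \<and> ph r \<le> b0 * r powr \<eta> / (1 + r powr \<eta>)"
    using assms unfolding kernel_assumption_def by auto
  have "0 \<le> r powr \<eta>" by simp
  then have "1 + r powr \<eta> > 0" by linarith
  then have "r powr \<eta> / (1 + r powr \<eta>) \<le> 1" by (simp add: divide_le_eq)
  then have "b0 * (r powr \<eta> / (1 + r powr \<eta>)) \<le> b0 * 1"
    using b0 by (intro mult_left_mono) auto
  then show ?thesis using h by simp
qed

lemma Phi_bound: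
  assumes phb: "\<forall>r\<ge>0. 0 \<le> ph r \<and> ph r \<le> b0" and "a \<ge> 0" "b \<ge> 0"
  shows "0 \<le> Phi ph a b \<and> Phi ph a b \<le> 4 * b0^2"
proof -
  have 1: "0 \<le> ph a \<and> ph a \<le> b0" using phb assms(2) by blast
  have 2: "0 \<le> ph b \<and> ph b \<le> b0" using phb assms(3) by blast
  have s0: "0 \<le> ph a + ph b" using 1 2 by linarith
  have s1: "ph a + ph b \<le> 2 * b0" using 1 2 by linarith
  have "(ph a + ph b)^2 \<le> (2*b0)^2" by (rule power_mono[OF s1 s0])
  moreover have "(2*b0)^2 = 4 * b0^2" by (simp add: power2_eq_square)
  moreover have "0 \<le> (ph a + ph b)^2" by (rule zero_le_power2)
  ultimately show ?thesis unfolding Phi_def by linarith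
qed

lemma Ystar_nonneg: "0 \<le> Ystar x y z s \<theta>"
  unfolding Ystar_def Let_def
  by (rule if_split[THEN iffD2]) (intro conjI impI norm_ge_zero order_refl)

lemma xstar_pos_aux: "xstar x y z * x * y * z > 0 \<Longrightarrow> x > 0 \<Longrightarrow> y \<ge> 0 \<Longrightarrow> z \<ge> 0 \<Longrightarrow> y > 0 \<and> z > 0 \<and> xstar x y z > 0"
proof -
  assume a: "xstar x y z * x * y * z > 0" "x > 0" "y \<ge> 0" "z \<ge> 0"
  have xs: "xstar x y z \<ge> 0" unfolding xstar_def by simp
  show ?thesis
  proof (intro conjI)
    show "y > 0" using a xs by (metis less_eq_real_def mult_eq_0_iff not_less_iff_gr_or_eq)
    show "z > 0" using a xs by (metis less_eq_real_def mult_eq_0_iff not_less_iff_gr_or_eq)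
    show "xstar x y z > 0" using a xs by (metis less_eq_real_def mult_eq_0_iff not_less_iff_gr_or_eq)
  qed
qed
lemma xstar_pos_lt: "xstar x y z > 0 \<Longrightarrow> x < y + z" unfolding xstar_def by (simp add: max_def split: if_splits)

lemma W_bound:
  assumes phb: "\<forall>r\<ge>0. 0 \<le> ph r \<and> ph r \<le> b0" and x: "x > 0" and y: "y \<ge> 0" and z: "z \<ge> 0"
  shows "0 \<le> W ph x y z \<and> W ph x y z * sqrt y * sqrt z \<le> (if x < y + z then 4 * b0^2 else 0)"
proof (cases "xstar x y z * x * y * z > 0")
  case True
  have "0 \<le> ph 0 \<and> ph 0 \<le> b0" using phb by simp
  then have b0: "0 \<le> b0" by linarith
  have yz: "y > 0" "z > 0" "xstar x y z > 0" using xstar_pos_aux[OF True x y z] by auto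
  have xyz: "x < y + z" by (rule xstar_pos_lt[OF yz(3)])
  define lo where "lo = max \<bar>sqrt x - sqrt y\<bar> \<bar>sqrt (xstar x y z) - sqrt z\<bar>"
  define hi where "hi = min (sqrt x + sqrt y) (sqrt (xstar x y z) + sqrt z)"
  define I where "I s = (LINT \<theta>:{0..2*pi}|lborel. Phi ph (sqrt 2 * s) (sqrt 2 * Ystar x y z s \<theta>))" for s
  have Ib: "0 \<le> I s \<and> I s \<le> 8 * pi * b0^2" if "s \<in> {lo..hi}" for s
  proof -
    have "0 \<le> lo" unfolding lo_def by (simp add: le_max_iff_disj)
    then have s0: "s \<ge> 0" using that by simp
    have "0 \<le> I s \<and> I s \<le> 4 * b0^2 * max (2*pi - 0) 0"
      unfolding I_def
      by (rule set_lint_interval_bound) (use s0 in \<open>auto intro!: Phi_bound[OF phb] Ystar_nonneg mult_nonneg_nonneg\<close>)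
    then show ?thesis by (simp add: mult_ac)
  qed
  have Ob: "0 \<le> (LINT s:{lo..hi}|lborel. I s) \<and> (LINT s:{lo..hi}|lborel. I s) \<le> 8 * pi * b0^2 * max (hi - lo) 0"
    by (rule set_lint_interval_bound) (use Ib in blast)
  have h1: "hi \<le> sqrt x + sqrt y" unfolding hi_def by (rule min.cobounded1)
  have h2: "\<bar>sqrt x - sqrt y\<bar> \<le> lo" unfolding lo_def by (rule max.cobounded1)
  have h3: "(sqrt x + sqrt y) - \<bar>sqrt x - sqrt y\<bar> \<le> 2 * sqrt x" by (simp split: abs_split)
  have hl: "max (hi - lo) 0 \<le> 2 * sqrt x" using h1 h2 h3 x by (simp add: less_imp_le)
  have O2: "(LINT s:{lo..hi}|lborel. I s) \<le> 16 * pi * b0^2 * sqrt x"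
  proof -
    have "8 * pi * b0^2 * max (hi - lo) 0 \<le> 8 * pi * b0^2 * (2 * sqrt x)"
      by (intro mult_left_mono hl) (use b0 in auto)
    moreover have "8 * pi * b0^2 * (2 * sqrt x) = 16 * pi * b0^2 * sqrt x" by simp
    ultimately show ?thesis using Ob by linarith
  qed
  have Wv: "W ph x y z = 1 / (4 * pi * sqrt (x * y * z)) * (LINT s:{lo..hi}|lborel. I s)"
    unfolding W_def if_P[OF True] lo_def hi_def I_def ..
  have sx: "sqrt x > 0" "sqrt y > 0" "sqrt z > 0" using x yz by auto
  have gen: "1 / (4 * pi * sqrt (x * y * z)) * v * sqrt y * sqrt z = v / (4 * pi * sqrt x)" for v
    using sx by (simp add: real_sqrt_mult field_simps)
  have "W ph x y z * sqrt y * sqrt z = (LINT s:{lo..hi}|lborel. I s) / (4 * pi * sqrt x)"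
    unfolding Wv by (rule gen)
  also have "\<dots> \<le> (16 * pi * b0^2 * sqrt x) / (4 * pi * sqrt x)"
    by (intro divide_right_mono O2) (use sx in auto)
  also have "\<dots> = 4 * b0^2" using sx by (simp add: field_simps)
  finally have W1: "W ph x y z * sqrt y * sqrt z \<le> 4 * b0^2" .
  have W0: "0 \<le> W ph x y z" unfolding Wv
    by (rule mult_nonneg_nonneg) (use Ob sx in auto)
  show ?thesis using W0 W1 xyz by simp
next
  case False
  have nx: "\<not> (x = 0 \<and> y > 0 \<and> z > 0)" using x by auto
  have Wv: "W ph x y z = (if y = 0 \<and> z > x \<and> x > 0 then
        Phi ph (sqrt (2*x)) (sqrt (2*(z - x))) / sqrt (x * z)
      else if z = 0 \<and> y > x \<and> x > 0 then
        Phi ph (sqrt (2*(y - x))) (sqrt (2*x)) / sqrt (x * y)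
      else 0)"
    unfolding W_def if_not_P[OF False] if_not_P[OF nx] ..
  have "0 \<le> W ph x y z" unfolding Wv
    by (auto intro!: divide_nonneg_nonneg simp: Phi_def)
  moreover have "W ph x y z * sqrt y * sqrt z = 0"
  proof -
    have "y = 0 \<or> z = 0 \<or> W ph x y z = 0" unfolding Wv by auto
    then show ?thesis by auto
  qed
  ultimately show ?thesis by auto
qed


lemma ennreal_integral_le:
  fixes h :: "'a \<Rightarrow> real"
  shows "ennreal (integral\<^sup>L M h) \<le> (\<integral>\<^sup>+x. ennreal (h x) \<partial>M)"
proof (cases "integrable M h")
  case True
  have "integral\<^sup>L M h \<le> integral\<^sup>L M (\<lambda>x. max (h x) 0)"
    by (intro integral_mono True) (auto intro: integrable_max True)
  also have "\<dots> = enn2real (\<integral>\<^sup>+x. ennreal (max (h x) 0) \<partial>M)"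
    by (rule integral_eq_nn_integral) (use True in auto)
  also have "(\<integral>\<^sup>+x. ennreal (max (h x) 0) \<partial>M) = (\<integral>\<^sup>+x. ennreal (h x) \<partial>M)"
    by (intro nn_integral_cong) (simp add: max_def ennreal_neg)
  finally have le: "integral\<^sup>L M h \<le> enn2real (\<integral>\<^sup>+x. ennreal (h x) \<partial>M)" .
  have fin: "(\<integral>\<^sup>+x. ennreal (h x) \<partial>M) < \<infinity>"
  proof -
    have "(\<integral>\<^sup>+x. ennreal (h x) \<partial>M) \<le> (\<integral>\<^sup>+x. ennreal (norm (h x)) \<partial>M)"
      by (intro nn_integral_mono) (auto intro: ennreal_leI)
    also have "\<dots> < \<infinity>" using True by (simp add: integrable_iff_bounded)
    finally show ?thesis .
  qed
  show ?thesis
    using le fin by (metis ennreal_enn2real ennreal_leI less_top order.strict_iff_not)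
next
  case False
  then show ?thesis by (simp add: not_integrable_integral_eq)
qed



lemma nn_power:
  assumes t: "(t::real) \<ge> 0"
  shows "(\<integral>\<^sup>+\<tau>. ennreal (\<tau>^n * indicator {0..t} \<tau>) \<partial>lborel) = ennreal (t^(Suc n) / Suc n)"
proof -
  have "integrable lborel (\<lambda>\<tau>. indicator {0..t} \<tau> *\<^sub>R \<tau>^n)"
    by (rule borel_integrable_compact) (auto intro!: continuous_intros)
  then have int: "integrable lborel (\<lambda>\<tau>. \<tau>^n * indicator {0..t} \<tau>)"
    by (simp add: mult.commute)
  have "(\<integral>\<^sup>+\<tau>. ennreal (\<tau>^n * indicator {0..t} \<tau>) \<partial>lborel) = ennreal (\<integral>\<tau>. \<tau>^n * indicator {0..t} \<tau> \<partial>lborel)"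
    by (rule nn_integral_eq_integral[OF int]) (auto simp: indicator_def)
  also have "(\<integral>\<tau>. \<tau>^n * indicator {0..t} \<tau> \<partial>lborel) = t^(Suc n) / Suc n"
    using integral_power[OF t, of n] by simp
  finally show ?thesis .
qed

lemma gronwall_enn:
  fixes E :: "real \<Rightarrow> ennreal"
  assumes B: "\<forall>t\<in>{0..T}. E t \<le> ennreal B" and B0: "0 \<le> B" and c: "0 \<le> c"
    and rec: "\<forall>t\<in>{0..T}. E t \<le> (\<integral>\<^sup>+\<tau>. ennreal c * E \<tau> * indicator {0..t} \<tau> \<partial>lborel)"
  shows "\<forall>t\<in>{0..T}. E t = 0"
proof -
  have pw: "\<forall>t\<in>{0..T}. E t \<le> ennreal (B * (c*t)^n / fact n)" for n
  proof (induction n)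
    case 0
    then show ?case using B by simp
  next
    case (Suc n)
    show ?case
    proof
      fix t assume t: "t \<in> {0..T}"
      have "E t \<le> (\<integral>\<^sup>+\<tau>. ennreal c * E \<tau> * indicator {0..t} \<tau> \<partial>lborel)"
        using rec t by blast
      also have "\<dots> \<le> (\<integral>\<^sup>+\<tau>. ennreal (c * B * c^n / fact n) * ennreal (\<tau>^n * indicator {0..t} \<tau>) \<partial>lborel)"
      proof (intro nn_integral_mono)
        fix \<tau> :: real
        show "ennreal c * E \<tau> * indicator {0..t} \<tau> \<le> ennreal (c * B * c^n / fact n) * ennreal (\<tau>^n * indicator {0..t} \<tau>)"
        proof (cases "\<tau> \<in> {0..t}")
          case True
          then have "\<tau> \<in> {0..T}" using t by auto
          then have "E \<tau> \<le> ennreal (B * (c*\<tau>)^n / fact n)" using Suc.IH by blast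
          then have "ennreal c * E \<tau> \<le> ennreal c * ennreal (B * (c*\<tau>)^n / fact n)"
            by (rule mult_left_mono) simp
          also have "\<dots> = ennreal (c * B * c^n / fact n) * ennreal (\<tau>^n)"
            using True c B0 by (simp add: ennreal_mult[symmetric] power_mult_distrib algebra_simps)
          finally show ?thesis using True by simp
        qed simp
      qed
      also have "\<dots> = ennreal (c * B * c^n / fact n) * (\<integral>\<^sup>+\<tau>. ennreal (\<tau>^n * indicator {0..t} \<tau>) \<partial>lborel)"
        by (rule nn_integral_cmult) measurable
      also have "\<dots> = ennreal (c * B * c^n / fact n) * ennreal (t^(Suc n) / Suc n)"
        using t by (simp add: nn_power)
      also have "\<dots> = ennreal (B * (c*t)^(Suc n) / fact (Suc n))"
        using t c B0 by (simp add: ennreal_mult[symmetric] power_mult_distrib field_simps)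
      finally show "E t \<le> ennreal (B * (c*t)^(Suc n) / fact (Suc n))" .
    qed
  qed
  show ?thesis
  proof
    fix t assume t: "t \<in> {0..T}"
    have lim: "(\<lambda>n. B * (inverse (fact n) * (c*T)^n)) \<longlonglongrightarrow> B * 0"
      by (intro tendsto_mult tendsto_const summable_LIMSEQ_zero summable_exp)
    have "E t \<le> ennreal (B * (inverse (fact n) * (c*T)^n))" for n
    proof -
      have "(c*t)^n \<le> (c*T)^n" using t c by (intro power_mono mult_left_mono) auto
      then have "B * (c*t)^n / fact n \<le> B * (inverse (fact n) * (c*T)^n)"
        using B0 by (simp add: divide_simps mult_left_mono)
      then show ?thesis using pw[of n] t by (meson ennreal_leI order.trans)
    qed
    moreover have "(\<lambda>n. ennreal (B * (inverse (fact n) * (c*T)^n))) \<longlonglongrightarrow> ennreal (B * 0)"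
      by (rule tendsto_ennrealI[OF lim])
    ultimately have "E t \<le> ennreal (B * 0)"
      by (intro LIMSEQ_le_const) auto
    then show "E t = 0" by simp
  qed
qed


lemma sf2: "sigma_finite_measure (lborel \<Otimes>\<^sub>M (lborel :: real measure))"
  by (rule sigma_finite_pair_measure) (rule lborel.sigma_finite_measure_axioms)+

lemma ennreal_add_le: "0 \<le> a \<Longrightarrow> ennreal (a + b) \<le> ennreal a + ennreal b"
proof (cases "b \<ge> 0")
  case True
  assume "0 \<le> a" then show ?thesis using True by (simp add: ennreal_plus)
next
  case False
  assume a: "0 \<le> a"
  have "ennreal (a + b) \<le> ennreal a" using False by (intro ennreal_leI) simp
  also have "\<dots> \<le> ennreal a + ennreal b" by simp
  finally show ?thesis .
qed

lemma psf12: "pair_sigma_finite lborel (lborel \<Otimes>\<^sub>M (lborel :: real measure))"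
  unfolding pair_sigma_finite_def using sf2 lborel.sigma_finite_measure_axioms by auto

context
  fixes ph :: "real \<Rightarrow> real" and f :: "real \<Rightarrow> real \<Rightarrow> real" and b0 M0 :: real and Z :: "real set"
  assumes phb: "\<forall>r\<ge>0. 0 \<le> ph r \<and> ph r \<le> b0"
  and fm[measurable]: "case_prod f \<in> borel_measurable (lborel \<Otimes>\<^sub>M lborel)"
  and fnn: "\<forall>x\<ge>0. \<forall>t\<ge>0. 0 \<le> f x t"
  and fint: "\<forall>t\<ge>0. set_integrable lborel {0..} (\<lambda>x. f x t)"
  and Ncont: "continuous_on {0..} (\<lambda>t. L1norm (\<lambda>x. f x t))"
  and M0: "0 \<le> M0" and f0b: "AE x in lborel. x \<ge> 0 \<longrightarrow> f x 0 \<le> M0"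
  and Z: "Z \<in> null_sets lborel"
  and feq: "\<forall>x\<in>{0..} - Z. \<forall>t\<ge>0. f x t = f x 0 + (LINT \<tau>:{0..t}|lborel. Qcoll ph f x \<tau>)"
begin

definition "Nn \<tau> = L1norm (\<lambda>x. f x \<tau>)"
definition "Sx t = (LINT \<tau>:{0..t}|lborel. (Nn \<tau>)^2)"
definition "Lm t = (1+M0) * exp (8*b0^2 * Sx t) - 1"
definition "Dp x \<tau> = max (f x \<tau> - Lm \<tau>) 0"

lemma f_meas2[measurable]: "(\<lambda>p. f (fst p) (snd p)) \<in> borel_measurable (lborel \<Otimes>\<^sub>M lborel)"
  using fm by (simp add: case_prod_beta')

lemma Nn_meas[measurable]: "Nn \<in> borel_measurable borel"
proof -
  have "(\<lambda>\<tau>. \<integral>x. indicator {0..} x *\<^sub>R \<bar>f x \<tau>\<bar> \<partial>lborel) \<in> borel_measurable borel"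
    by measurable
  then show ?thesis unfolding Nn_def[abs_def] L1norm_def set_lebesgue_integral_def .
qed

lemma Sx_meas[measurable]: "Sx \<in> borel_measurable borel"
proof -
  have "(\<lambda>t. \<integral>\<tau>. (if 0 \<le> \<tau> \<and> \<tau> \<le> t then (Nn \<tau>)^2 else 0) \<partial>lborel) \<in> borel_measurable borel"
    by measurable
  moreover have "(\<lambda>t. \<integral>\<tau>. (if 0 \<le> \<tau> \<and> \<tau> \<le> t then (Nn \<tau>)^2 else 0) \<partial>lborel) = Sx"
    unfolding Sx_def[abs_def] set_lebesgue_integral_def
    by (intro ext Bochner_Integration.integral_cong) (auto simp: indicator_def)
  ultimately show ?thesis by simp
qed

lemma Lm_meas[measurable]: "Lm \<in> borel_measurable borel"
  unfolding Lm_def[abs_def] by measurable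

lemma Dp_meas[measurable]: "case_prod Dp \<in> borel_measurable (lborel \<Otimes>\<^sub>M lborel)"
  unfolding Dp_def[abs_def] by measurable


lemma Nn_nonneg: "0 \<le> Nn \<tau>"
  unfolding Nn_def L1norm_def set_lebesgue_integral_def
  by (rule integral_nonneg_AE) (auto simp: indicator_def)

lemma Nn_nn_integral:
  assumes t: "\<tau> \<ge> 0"
  shows "(\<integral>\<^sup>+x. ennreal (f x \<tau>) * indicator {0..} x \<partial>lborel) = ennreal (Nn \<tau>)"
proof -
  have int: "integrable lborel (\<lambda>x. indicator {0..} x * f x \<tau>)"
    using fint t unfolding set_integrable_def by simp
  have "(\<integral>\<^sup>+x. ennreal (indicator {0..} x * f x \<tau>) \<partial>lborel) = ennreal (integral\<^sup>L lborel (\<lambda>x. indicator {0..} x * f x \<tau>))"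
    by (rule nn_integral_eq_integral[OF int]) (use fnn t in \<open>auto simp: indicator_def\<close>)
  moreover have "(\<integral>\<^sup>+x. ennreal (indicator {0..} x * f x \<tau>) \<partial>lborel) = (\<integral>\<^sup>+x. ennreal (f x \<tau>) * indicator {0..} x \<partial>lborel)"
    by (intro nn_integral_cong) (auto simp: indicator_def)
  moreover have "integral\<^sup>L lborel (\<lambda>x. indicator {0..} x * f x \<tau>) = Nn \<tau>"
    unfolding Nn_def L1norm_def set_lebesgue_integral_def
    by (intro Bochner_Integration.integral_cong) (use fnn t in \<open>auto simp: indicator_def\<close>)
  ultimately show ?thesis by simp
qed

lemma Nn_cont: "continuous_on {0..} Nn"
  using Ncont unfolding Nn_def[abs_def] .

lemma Nn2_cont: "t \<ge> 0 \<Longrightarrow> continuous_on {0..t} (\<lambda>\<tau>. (Nn \<tau>)^2)"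
  by (intro continuous_intros continuous_on_subset[OF Nn_cont]) auto

lemma Sx_eq: "t \<ge> 0 \<Longrightarrow> Sx t = integral {0..t} (\<lambda>\<tau>. (Nn \<tau>)^2)"
proof -
  assume t: "t \<ge> 0"
  have "set_integrable lborel {0..t} (\<lambda>\<tau>. (Nn \<tau>)^2)"
    unfolding set_integrable_def
    by (rule borel_integrable_compact) (auto intro: Nn2_cont[OF t])
  from set_borel_integral_eq_integral(2)[OF this] show ?thesis unfolding Sx_def .
qed

lemma Sx_nonneg: "t \<ge> 0 \<Longrightarrow> 0 \<le> Sx t"
  unfolding Sx_def set_lebesgue_integral_def
  by (rule integral_nonneg_AE) (auto simp: indicator_def)

lemma Sx_0: "Sx 0 = 0"
  using Sx_eq[of 0] by simp

lemma Lm_ge: "t \<ge> 0 \<Longrightarrow> M0 \<le> Lm t"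
proof -
  assume t: "t \<ge> 0"
  have "0 \<le> 8*b0^2 * Sx t" using Sx_nonneg[OF t] by simp
  then have "1 \<le> exp (8*b0^2 * Sx t)" by simp
  then have "(1+M0) * 1 \<le> (1+M0) * exp (8*b0^2 * Sx t)"
    by (intro mult_left_mono) (use M0 in auto)
  then show ?thesis unfolding Lm_def by simp
qed

lemma Lm_0: "Lm 0 = M0"
  unfolding Lm_def Sx_0 by simp

lemma Lm_int:
  assumes t: "t \<ge> 0"
  shows "(\<integral>\<^sup>+\<tau>. ennreal (4*b0^2*(Nn \<tau>)^2 * (1 + 2 * Lm \<tau>)) * indicator {0..t} \<tau> \<partial>lborel) \<le> ennreal (Lm t - M0)"
proof -
  define g where "g u = 8*b0^2*(Nn u)^2 * (1 + Lm u)" for u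
  define \<Phi> where "\<Phi> u = (1+M0) * exp (8*b0^2 * integral {0..u} (\<lambda>\<tau>. (Nn \<tau>)^2))" for u
  have der: "(\<Phi> has_vector_derivative g u) (at u within {0..t})" if u: "u \<in> {0..t}" for u
  proof -
    have "((\<lambda>u. integral {0..u} (\<lambda>\<tau>. (Nn \<tau>)^2)) has_vector_derivative (Nn u)^2) (at u within {0..t})"
      by (rule integral_has_vector_derivative[OF Nn2_cont[OF t] u])
    then have d1: "((\<lambda>u. integral {0..u} (\<lambda>\<tau>. (Nn \<tau>)^2)) has_real_derivative (Nn u)^2) (at u within {0..t})"
      by (simp add: has_real_derivative_iff_has_vector_derivative)
    have "(\<Phi> has_real_derivative (1+M0) * (exp (8*b0^2 * integral {0..u} (\<lambda>\<tau>. (Nn \<tau>)^2)) * (8*b0^2 * (Nn u)^2))) (at u within {0..t})"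
      unfolding \<Phi>_def[abs_def]
      by (intro DERIV_cmult DERIV_chain2[OF DERIV_exp] DERIV_cmult d1)
    moreover have "(1+M0) * (exp (8*b0^2 * integral {0..u} (\<lambda>\<tau>. (Nn \<tau>)^2)) * (8*b0^2 * (Nn u)^2)) = g u"
      unfolding g_def Lm_def using Sx_eq[of u] u by (simp add: algebra_simps)
    ultimately show ?thesis by (simp add: has_real_derivative_iff_has_vector_derivative)
  qed
  have "(g has_integral (\<Phi> t - \<Phi> 0)) {0..t}"
    by (rule fundamental_theorem_of_calculus[OF t der])
  moreover have "\<Phi> t - \<Phi> 0 = Lm t - M0"
    unfolding \<Phi>_def Lm_def using Sx_eq[OF t] by simp
  ultimately have hi: "(g has_integral (Lm t - M0)) {0..t}" by simp
  have gnn: "0 \<le> g u" if "u \<in> {0..t}" for u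
    unfolding g_def using Lm_ge[of u] M0 that by simp
  have "(\<integral>\<^sup>+\<tau>. ennreal (indicator {0..t} \<tau> * g \<tau>) \<partial>lborel) = ennreal (Lm t - M0)"
    by (rule nn_integral_has_integral_lebesgue[OF gnn hi])
  moreover have "(\<integral>\<^sup>+\<tau>. ennreal (4*b0^2*(Nn \<tau>)^2 * (1 + 2 * Lm \<tau>)) * indicator {0..t} \<tau> \<partial>lborel)
      \<le> (\<integral>\<^sup>+\<tau>. ennreal (indicator {0..t} \<tau> * g \<tau>) \<partial>lborel)"
  proof (intro nn_integral_mono)
    fix u
    show "ennreal (4*b0^2*(Nn u)^2 * (1 + 2 * Lm u)) * indicator {0..t} u \<le> ennreal (indicator {0..t} u * g u)"
    proof (cases "u \<in> {0..t}")
      case True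
      have "4*b0^2*(Nn u)^2 * (1 + 2 * Lm u) \<le> 4*b0^2*(Nn u)^2 * (2 + 2 * Lm u)"
        by (intro mult_left_mono) auto
      then show ?thesis using True unfolding g_def by (auto intro!: ennreal_leI simp: algebra_simps)
    qed simp
  qed
  ultimately show ?thesis by simp
qed


definition "Kc x \<tau> = (\<integral>\<^sup>+p. ennreal (f (fst p) \<tau> * f (snd p) \<tau> * (if x < fst p + snd p then Dp (fst p + snd p - x) \<tau> else 0)) * indicator ({0..}\<times>{0..}) p \<partial>(lborel \<Otimes>\<^sub>M lborel))"

lemma PQ:
  assumes t: "\<tau> \<ge> 0"
  shows "(\<integral>\<^sup>+p. ennreal (f (fst p) \<tau> * f (snd p) \<tau>) * indicator ({0..}\<times>{0..}) p \<partial>(lborel \<Otimes>\<^sub>M lborel)) = ennreal ((Nn \<tau>)^2)"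
proof -
  have "(\<integral>\<^sup>+p. ennreal (f (fst p) \<tau> * f (snd p) \<tau>) * indicator ({0..}\<times>{0..}) p \<partial>(lborel \<Otimes>\<^sub>M lborel))
     = (\<integral>\<^sup>+y. \<integral>\<^sup>+z. ennreal (f y \<tau> * f z \<tau>) * indicator ({0..}\<times>{0..}) (y, z) \<partial>lborel \<partial>lborel)"
  proof -
    have m: "(\<lambda>p. ennreal (f (fst p) \<tau> * f (snd p) \<tau>) * indicator ({0..}\<times>{0..}) p) \<in> borel_measurable (lborel \<Otimes>\<^sub>M lborel)"
      by measurable
    show ?thesis using lborel.nn_integral_fst[OF m] by simp
  qed
  also have "\<dots> = (\<integral>\<^sup>+y. (ennreal (f y \<tau>) * indicator {0..} y) * (\<integral>\<^sup>+z. ennreal (f z \<tau>) * indicator {0..} z \<partial>lborel) \<partial>lborel)"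
  proof (intro nn_integral_cong)
    fix y :: real
    have "(\<integral>\<^sup>+z. ennreal (f y \<tau> * f z \<tau>) * indicator ({0..}\<times>{0..}) (y, z) \<partial>lborel)
        = (\<integral>\<^sup>+z. (ennreal (f y \<tau>) * indicator {0..} y) * (ennreal (f z \<tau>) * indicator {0..} z) \<partial>lborel)"
      by (intro nn_integral_cong) (use fnn t in \<open>auto simp: indicator_def ennreal_mult\<close>)
    also have "\<dots> = (ennreal (f y \<tau>) * indicator {0..} y) * (\<integral>\<^sup>+z. ennreal (f z \<tau>) * indicator {0..} z \<partial>lborel)"
      by (rule nn_integral_cmult) measurable
    finally show "(\<integral>\<^sup>+z. ennreal (f y \<tau> * f z \<tau>) * indicator ({0..}\<times>{0..}) (y, z) \<partial>lborel)
        = (ennreal (f y \<tau>) * indicator {0..} y) * (\<integral>\<^sup>+z. ennreal (f z \<tau>) * indicator {0..} z \<partial>lborel)" .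
  qed
  also have "\<dots> = (\<integral>\<^sup>+y. ennreal (f y \<tau>) * indicator {0..} y \<partial>lborel) * (\<integral>\<^sup>+z. ennreal (f z \<tau>) * indicator {0..} z \<partial>lborel)"
    by (rule nn_integral_multc) measurable
  also have "\<dots> = ennreal (Nn \<tau>) * ennreal (Nn \<tau>)"
    using Nn_nn_integral[OF t] by simp
  also have "\<dots> = ennreal ((Nn \<tau>)^2)"
    using Nn_nonneg by (simp add: ennreal_mult[symmetric] power2_eq_square)
  finally show ?thesis .
qed


lemma Lm_nonneg: "\<tau> \<ge> 0 \<Longrightarrow> 0 \<le> Lm \<tau>"
  using Lm_ge M0 by fastforce

lemma f_le_Lm_Dp: "f x \<tau> \<le> Lm \<tau> + Dp x \<tau>"
  unfolding Dp_def by simp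

lemma Dp_nonneg: "0 \<le> Dp x \<tau>"
  unfolding Dp_def by simp

lemma pointwise_G:
  assumes x: "x > 0" and t: "\<tau> \<ge> 0" and y: "y \<ge> 0" and z: "z \<ge> 0"
  shows "W ph x y z * (gain f x y z \<tau> - loss f x y z \<tau>) * sqrt y * sqrt z
     \<le> 4*b0^2 * (f y \<tau> * f z \<tau>) * (1 + 2 * Lm \<tau> + Dp x \<tau>)
       + 4*b0^2 * (f y \<tau> * f z \<tau> * (if x < y + z then Dp (y + z - x) \<tau> else 0))"
proof -
  have Wb: "0 \<le> W ph x y z" "W ph x y z * sqrt y * sqrt z \<le> (if x < y + z then 4 * b0^2 else 0)"
    using W_bound[OF phb x y z] by auto
  have xs: "xstar x y z \<ge> 0" unfolding xstar_def by simp
  have fy: "0 \<le> f y \<tau>" and fz: "0 \<le> f z \<tau>" and fx: "0 \<le> f x \<tau>" and fxs: "0 \<le> f (xstar x y z) \<tau>"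
    using fnn x y z t xs by auto
  have g0: "0 \<le> gain f x y z \<tau>" unfolding gain_def using fy fz fx fxs by simp
  have l0: "0 \<le> loss f x y z \<tau>" unfolding loss_def using fy fz fx fxs by simp
  have yz0: "0 \<le> f y \<tau> * f z \<tau>" using fy fz by simp
  have L0: "0 \<le> Lm \<tau>" by (rule Lm_nonneg[OF t])
  have "W ph x y z * (gain f x y z \<tau> - loss f x y z \<tau>) * sqrt y * sqrt z
      \<le> W ph x y z * gain f x y z \<tau> * sqrt y * sqrt z"
    using Wb(1) l0 y z by (intro mult_right_mono mult_left_mono) auto
  also have "\<dots> = (W ph x y z * sqrt y * sqrt z) * gain f x y z \<tau>" by (simp add: algebra_simps)
  also have "\<dots> \<le> (if x < y + z then 4 * b0^2 else 0) * gain f x y z \<tau>"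
    by (rule mult_right_mono[OF Wb(2) g0])
  also have "\<dots> \<le> 4*b0^2 * (f y \<tau> * f z \<tau>) * (1 + 2 * Lm \<tau> + Dp x \<tau>)
       + 4*b0^2 * (f y \<tau> * f z \<tau> * (if x < y + z then Dp (y + z - x) \<tau> else 0))"
  proof (cases "x < y + z")
    case True
    have xse: "xstar x y z = y + z - x" unfolding xstar_def using True by simp
    have "1 + f x \<tau> + f (xstar x y z) \<tau> \<le> (1 + 2 * Lm \<tau> + Dp x \<tau>) + Dp (y + z - x) \<tau>"
      using f_le_Lm_Dp[of x \<tau>] f_le_Lm_Dp[of "y + z - x" \<tau>] xse by simp
    then have "(f y \<tau> * f z \<tau>) * (1 + f x \<tau> + f (xstar x y z) \<tau>) \<le> (f y \<tau> * f z \<tau>) * ((1 + 2 * Lm \<tau> + Dp x \<tau>) + Dp (y + z - x) \<tau>)"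
      by (rule mult_left_mono[OF _ yz0])
    then have "4*b0^2 * ((f y \<tau> * f z \<tau>) * (1 + f x \<tau> + f (xstar x y z) \<tau>)) \<le> 4*b0^2 * ((f y \<tau> * f z \<tau>) * ((1 + 2 * Lm \<tau> + Dp x \<tau>) + Dp (y + z - x) \<tau>))"
      by (rule mult_left_mono) simp
    then show ?thesis using True unfolding gain_def by (simp add: algebra_simps)
  next
    case False
    have "0 \<le> 4*b0^2 * (f y \<tau> * f z \<tau>) * (1 + 2 * Lm \<tau> + Dp x \<tau>)"
      using yz0 L0 Dp_nonneg[of x \<tau>] by simp
    then show ?thesis using False by simp
  qed
  finally show ?thesis .
qed


lemma Q_bound:
  assumes x: "x > 0" and t: "\<tau> \<ge> 0"
  shows "ennreal (Qcoll ph f x \<tau>) \<le> ennreal (4*b0^2*(Nn \<tau>)^2*(1+2*Lm \<tau>)) + ennreal (4*b0^2*(Nn \<tau>)^2) * ennreal (Dp x \<tau>) + ennreal (4*b0^2) * Kc x \<tau>"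
proof -
  define F where "F p = W ph x (fst p) (snd p) * (gain f x (fst p) (snd p) \<tau> - loss f x (fst p) (snd p) \<tau>) * sqrt (fst p) * sqrt (snd p)" for p
  define c1 where "c1 = 4*b0^2*(1 + 2 * Lm \<tau> + Dp x \<tau>)"
  define H where "H p = ennreal (f (fst p) \<tau> * f (snd p) \<tau> * (if x < fst p + snd p then Dp (fst p + snd p - x) \<tau> else 0)) * indicator ({0..}\<times>{0..}) p" for p
  have c1: "0 \<le> c1" unfolding c1_def using Lm_nonneg[OF t] Dp_nonneg[of x \<tau>] by simp
  have "ennreal (Qcoll ph f x \<tau>) = ennreal (integral\<^sup>L (lborel \<Otimes>\<^sub>M lborel) (\<lambda>p. indicator ({0..}\<times>{0..}) p *\<^sub>R F p))"
    unfolding Qcoll_def set_lebesgue_integral_def F_def ..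
  also have "\<dots> \<le> (\<integral>\<^sup>+p. ennreal (indicator ({0..}\<times>{0..}) p *\<^sub>R F p) \<partial>(lborel \<Otimes>\<^sub>M lborel))"
    by (rule ennreal_integral_le)
  also have "\<dots> \<le> (\<integral>\<^sup>+p. ennreal c1 * (ennreal (f (fst p) \<tau> * f (snd p) \<tau>) * indicator ({0..}\<times>{0..}) p) + ennreal (4*b0^2) * H p \<partial>(lborel \<Otimes>\<^sub>M lborel))"
  proof (intro nn_integral_mono)
    fix p :: "real \<times> real"
    show "ennreal (indicator ({0..}\<times>{0..}) p *\<^sub>R F p) \<le> ennreal c1 * (ennreal (f (fst p) \<tau> * f (snd p) \<tau>) * indicator ({0..}\<times>{0..}) p) + ennreal (4*b0^2) * H p"
    proof (cases "p \<in> {0..}\<times>{0..}")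
      case True
      then have y: "fst p \<ge> 0" and z: "snd p \<ge> 0" by auto
      have fy: "0 \<le> f (fst p) \<tau> * f (snd p) \<tau>" using fnn y z t by simp
      have D2: "0 \<le> (if x < fst p + snd p then Dp (fst p + snd p - x) \<tau> else 0)" using Dp_nonneg by simp
      have "F p \<le> c1 * (f (fst p) \<tau> * f (snd p) \<tau>) + 4*b0^2 * (f (fst p) \<tau> * f (snd p) \<tau> * (if x < fst p + snd p then Dp (fst p + snd p - x) \<tau> else 0))"
        unfolding F_def c1_def using pointwise_G[OF x t y z] by (simp add: algebra_simps)
      then have "ennreal (F p) \<le> ennreal (c1 * (f (fst p) \<tau> * f (snd p) \<tau>) + 4*b0^2 * (f (fst p) \<tau> * f (snd p) \<tau> * (if x < fst p + snd p then Dp (fst p + snd p - x) \<tau> else 0)))"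
        by (rule ennreal_leI)
      also have "\<dots> = ennreal c1 * ennreal (f (fst p) \<tau> * f (snd p) \<tau>) + ennreal (4*b0^2) * ennreal (f (fst p) \<tau> * f (snd p) \<tau> * (if x < fst p + snd p then Dp (fst p + snd p - x) \<tau> else 0))"
        using c1 fy D2 by (simp add: ennreal_plus ennreal_mult)
      finally show ?thesis using True unfolding H_def by simp
    next
      case False
      then show ?thesis by simp
    qed
  qed
  also have "\<dots> = ennreal c1 * (\<integral>\<^sup>+p. ennreal (f (fst p) \<tau> * f (snd p) \<tau>) * indicator ({0..}\<times>{0..}) p \<partial>(lborel \<Otimes>\<^sub>M lborel)) + ennreal (4*b0^2) * Kc x \<tau>"
  proof -
    have "(\<integral>\<^sup>+p. ennreal c1 * (ennreal (f (fst p) \<tau> * f (snd p) \<tau>) * indicator ({0..}\<times>{0..}) p) + ennreal (4*b0^2) * H p \<partial>(lborel \<Otimes>\<^sub>M lborel))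
       = (\<integral>\<^sup>+p. ennreal c1 * (ennreal (f (fst p) \<tau> * f (snd p) \<tau>) * indicator ({0..}\<times>{0..}) p) \<partial>(lborel \<Otimes>\<^sub>M lborel)) + (\<integral>\<^sup>+p. ennreal (4*b0^2) * H p \<partial>(lborel \<Otimes>\<^sub>M lborel))"
      unfolding H_def by (rule nn_integral_add) measurable
    also have "(\<integral>\<^sup>+p. ennreal c1 * (ennreal (f (fst p) \<tau> * f (snd p) \<tau>) * indicator ({0..}\<times>{0..}) p) \<partial>(lborel \<Otimes>\<^sub>M lborel))
       = ennreal c1 * (\<integral>\<^sup>+p. ennreal (f (fst p) \<tau> * f (snd p) \<tau>) * indicator ({0..}\<times>{0..}) p \<partial>(lborel \<Otimes>\<^sub>M lborel))"
      by (rule nn_integral_cmult) measurable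
    also have "(\<integral>\<^sup>+p. ennreal (4*b0^2) * H p \<partial>(lborel \<Otimes>\<^sub>M lborel)) = ennreal (4*b0^2) * Kc x \<tau>"
      unfolding H_def Kc_def by (rule nn_integral_cmult) measurable
    finally show ?thesis .
  qed
  also have "\<dots> = ennreal (4*b0^2*(Nn \<tau>)^2*(1+2*Lm \<tau>)) + ennreal (4*b0^2*(Nn \<tau>)^2) * ennreal (Dp x \<tau>) + ennreal (4*b0^2) * Kc x \<tau>"
  proof -
    have "ennreal c1 * ennreal ((Nn \<tau>)^2) = ennreal (4*b0^2*(Nn \<tau>)^2*(1+2*Lm \<tau>) + 4*b0^2*(Nn \<tau>)^2 * Dp x \<tau>)"
      using c1 unfolding c1_def by (simp add: ennreal_mult[symmetric] algebra_simps)
    also have "\<dots> = ennreal (4*b0^2*(Nn \<tau>)^2*(1+2*Lm \<tau>)) + ennreal (4*b0^2*(Nn \<tau>)^2) * ennreal (Dp x \<tau>)"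
      using Lm_nonneg[OF t] Dp_nonneg[of x \<tau>] by (simp add: ennreal_plus ennreal_mult)
    finally show ?thesis using PQ[OF t] by simp
  qed
  finally show ?thesis .
qed


lemma Kc_meas[measurable]: "case_prod Kc \<in> borel_measurable (lborel \<Otimes>\<^sub>M lborel)"
proof -
  have m: "(\<lambda>(q, p). ennreal (f (fst p) (snd q) * f (snd p) (snd q) * (if fst q < fst p + snd p then Dp (fst p + snd p - fst q) (snd q) else 0)) * indicator ({0..}\<times>{0..}) p)
     \<in> borel_measurable ((lborel \<Otimes>\<^sub>M lborel) \<Otimes>\<^sub>M (lborel \<Otimes>\<^sub>M lborel))"
    by measurable
  have "(\<lambda>q. \<integral>\<^sup>+p. ennreal (f (fst p) (snd q) * f (snd p) (snd q) * (if fst q < fst p + snd p then Dp (fst p + snd p - fst q) (snd q) else 0)) * indicator ({0..}\<times>{0..}) p \<partial>(lborel \<Otimes>\<^sub>M lborel))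
     \<in> borel_measurable (lborel \<Otimes>\<^sub>M lborel)"
    by (rule sigma_finite_measure.borel_measurable_nn_integral[OF sf2 m])
  then show ?thesis unfolding Kc_def[abs_def] by (simp add: case_prod_beta')
qed

lemma Dp_bound:
  assumes x: "x > 0" "x \<notin> Z" "f x 0 \<le> M0" and t: "t \<ge> 0"
  shows "ennreal (Dp x t) \<le> (\<integral>\<^sup>+\<tau>. (ennreal (4*b0^2*(Nn \<tau>)^2) * ennreal (Dp x \<tau>) + ennreal (4*b0^2) * Kc x \<tau>) * indicator {0..t} \<tau> \<partial>lborel)"
    (is "_ \<le> ?R")
proof -
  define I where "I = (LINT \<tau>:{0..t}|lborel. Qcoll ph f x \<tau>)"
  have xin: "x \<in> {0..} - Z" using x by auto
  have fx: "f x t = f x 0 + I" unfolding I_def using bspec[OF feq xin] t by blast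
  have fx0: "0 \<le> f x 0" using fnn x by auto
  have "ennreal I \<le> (\<integral>\<^sup>+\<tau>. ennreal (indicator {0..t} \<tau> *\<^sub>R Qcoll ph f x \<tau>) \<partial>lborel)"
    unfolding I_def set_lebesgue_integral_def by (rule ennreal_integral_le)
  also have "\<dots> \<le> (\<integral>\<^sup>+\<tau>. ennreal (4*b0^2*(Nn \<tau>)^2*(1+2*Lm \<tau>)) * indicator {0..t} \<tau>
        + (ennreal (4*b0^2*(Nn \<tau>)^2) * ennreal (Dp x \<tau>) + ennreal (4*b0^2) * Kc x \<tau>) * indicator {0..t} \<tau> \<partial>lborel)"
  proof (intro nn_integral_mono)
    fix \<tau> :: real
    show "ennreal (indicator {0..t} \<tau> *\<^sub>R Qcoll ph f x \<tau>) \<le> ennreal (4*b0^2*(Nn \<tau>)^2*(1+2*Lm \<tau>)) * indicator {0..t} \<tau>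
        + (ennreal (4*b0^2*(Nn \<tau>)^2) * ennreal (Dp x \<tau>) + ennreal (4*b0^2) * Kc x \<tau>) * indicator {0..t} \<tau>"
    proof (cases "\<tau> \<in> {0..t}")
      case True
      then have "\<tau> \<ge> 0" by auto
      from Q_bound[OF x(1) this] True show ?thesis by (simp add: add.assoc)
    qed simp
  qed
  also have "\<dots> = (\<integral>\<^sup>+\<tau>. ennreal (4*b0^2*(Nn \<tau>)^2*(1+2*Lm \<tau>)) * indicator {0..t} \<tau> \<partial>lborel) + ?R"
    by (rule nn_integral_add) measurable
  also have "\<dots> \<le> ennreal (Lm t - M0) + ?R"
    by (intro add_right_mono Lm_int[OF t])
  finally have IR: "ennreal I \<le> ennreal (Lm t - M0) + ?R" .
  have "ennreal (f x t) \<le> ennreal (f x 0) + ennreal I"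
    unfolding fx by (rule ennreal_add_le[OF fx0])
  also have "\<dots> \<le> ennreal M0 + (ennreal (Lm t - M0) + ?R)"
    by (intro add_mono ennreal_leI x(3) IR)
  also have "\<dots> = ennreal (Lm t) + ?R"
    using M0 Lm_ge[OF t] by (simp add: add.assoc[symmetric] ennreal_plus[symmetric])
  finally have fle: "ennreal (f x t) \<le> ennreal (Lm t) + ?R" .
  have "ennreal (Dp x t) = ennreal (f x t) - ennreal (Lm t)"
    unfolding Dp_def using Lm_nonneg[OF t] by (simp add: ennreal_minus max_def ennreal_neg)
  also have "\<dots> \<le> ?R"
    using fle by (simp add: ennreal_minus_le_iff)
  finally show ?thesis .
qed


definition "Ep \<tau> = (\<integral>\<^sup>+x. ennreal (Dp x \<tau>) * indicator {0..} x \<partial>lborel)"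

lemma refl_bound:
  "(\<integral>\<^sup>+x. ennreal (if x < c then Dp (c - x) \<tau> else 0) * indicator {0..} x \<partial>lborel) \<le> Ep \<tau>"
proof -
  define g where "g u = ennreal (Dp u \<tau>) * indicator {0..} u" for u
  have gm: "g \<in> borel_measurable borel" unfolding g_def by measurable
  have "(\<integral>\<^sup>+x. ennreal (if x < c then Dp (c - x) \<tau> else 0) * indicator {0..} x \<partial>lborel) \<le> (\<integral>\<^sup>+x. g (c + (-1) * x) \<partial>lborel)"
    by (intro nn_integral_mono) (auto simp: g_def indicator_def)
  also have "\<dots> = (\<integral>\<^sup>+x. g x \<partial>lborel)"
    using nn_integral_real_affine[OF gm, of "-1" c] by simp
  also have "\<dots> = Ep \<tau>" unfolding g_def Ep_def ..
  finally show ?thesis .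
qed

lemma KE:
  assumes t: "\<tau> \<ge> 0"
  shows "(\<integral>\<^sup>+x. Kc x \<tau> * indicator {0..} x \<partial>lborel) \<le> ennreal ((Nn \<tau>)^2) * Ep \<tau>"
proof -
  define h where "h x p = ennreal (f (fst p) \<tau> * f (snd p) \<tau> * (if x < fst p + snd p then Dp (fst p + snd p - x) \<tau> else 0)) * indicator ({0..}\<times>{0..}) p * indicator {0..} x" for x and p :: "real \<times> real"
  have hm: "case_prod h \<in> borel_measurable (lborel \<Otimes>\<^sub>M (lborel \<Otimes>\<^sub>M lborel))"
    unfolding h_def by measurable
  have "(\<integral>\<^sup>+x. Kc x \<tau> * indicator {0..} x \<partial>lborel) = (\<integral>\<^sup>+x. \<integral>\<^sup>+p. h x p \<partial>(lborel \<Otimes>\<^sub>M lborel) \<partial>lborel)"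
    unfolding Kc_def h_def
    by (intro nn_integral_cong nn_integral_multc[symmetric]) measurable
  also have "\<dots> = (\<integral>\<^sup>+p. \<integral>\<^sup>+x. h x p \<partial>lborel \<partial>(lborel \<Otimes>\<^sub>M lborel))"
    by (rule pair_sigma_finite.Fubini'[OF psf12 hm, symmetric])
  also have "\<dots> \<le> (\<integral>\<^sup>+p. ennreal (f (fst p) \<tau> * f (snd p) \<tau>) * indicator ({0..}\<times>{0..}) p * Ep \<tau> \<partial>(lborel \<Otimes>\<^sub>M lborel))"
  proof (intro nn_integral_mono)
    fix p :: "real \<times> real"
    show "(\<integral>\<^sup>+x. h x p \<partial>lborel) \<le> ennreal (f (fst p) \<tau> * f (snd p) \<tau>) * indicator ({0..}\<times>{0..}) p * Ep \<tau>"
    proof (cases "p \<in> {0..}\<times>{0..}")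
      case True
      then have y: "fst p \<ge> 0" and z: "snd p \<ge> 0" by auto
      have fy: "0 \<le> f (fst p) \<tau> * f (snd p) \<tau>" using fnn y z t by simp
      have "(\<integral>\<^sup>+x. h x p \<partial>lborel) = (\<integral>\<^sup>+x. ennreal (f (fst p) \<tau> * f (snd p) \<tau>) * (ennreal (if x < fst p + snd p then Dp (fst p + snd p - x) \<tau> else 0) * indicator {0..} x) \<partial>lborel)"
      proof (intro nn_integral_cong)
        fix x :: real
        have aux: "ennreal (a * d) * i = ennreal a * (ennreal d * i)" if "0 \<le> a" "0 \<le> d" for a d :: real and i :: ennreal
          using that by (simp add: ennreal_mult mult.assoc)
        show "h x p = ennreal (f (fst p) \<tau> * f (snd p) \<tau>) * (ennreal (if x < fst p + snd p then Dp (fst p + snd p - x) \<tau> else 0) * indicator {0..} x)"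
          unfolding h_def using True by (simp add: aux[OF fy] Dp_nonneg del: ennreal_mult' ennreal_mult'')
      qed
      also have "\<dots> = ennreal (f (fst p) \<tau> * f (snd p) \<tau>) * (\<integral>\<^sup>+x. ennreal (if x < fst p + snd p then Dp (fst p + snd p - x) \<tau> else 0) * indicator {0..} x \<partial>lborel)"
        by (rule nn_integral_cmult) measurable
      also have "\<dots> \<le> ennreal (f (fst p) \<tau> * f (snd p) \<tau>) * Ep \<tau>"
        by (intro mult_left_mono refl_bound) simp
      finally show ?thesis using True by simp
    next
      case False
      then show ?thesis unfolding h_def by simp
    qed
  qed
  also have "\<dots> = (\<integral>\<^sup>+p. ennreal (f (fst p) \<tau> * f (snd p) \<tau>) * indicator ({0..}\<times>{0..}) p \<partial>(lborel \<Otimes>\<^sub>M lborel)) * Ep \<tau>"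
    by (rule nn_integral_multc) measurable
  also have "\<dots> = ennreal ((Nn \<tau>)^2) * Ep \<tau>" using PQ[OF t] by simp
  finally show ?thesis .
qed


lemma E_bound:
  assumes t: "t \<ge> 0"
  shows "Ep t \<le> (\<integral>\<^sup>+\<tau>. ennreal (8*b0^2*(Nn \<tau>)^2) * Ep \<tau> * indicator {0..t} \<tau> \<partial>lborel)"
proof -
  define G where "G x \<tau> = (ennreal (4*b0^2*(Nn \<tau>)^2) * ennreal (Dp x \<tau>) + ennreal (4*b0^2) * Kc x \<tau>) * indicator {0..t} \<tau> * indicator {0..} x" for x \<tau>
  have Gm: "case_prod G \<in> borel_measurable (lborel \<Otimes>\<^sub>M lborel)"
    unfolding G_def by measurable
  have ae: "AE x in lborel. ennreal (Dp x t) * indicator {0..} x \<le> (\<integral>\<^sup>+\<tau>. G x \<tau> \<partial>lborel)"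
    using f0b AE_not_in[OF Z] AE_lborel_singleton[of 0]
  proof eventually_elim
    case (elim x)
    show ?case
    proof (cases "x \<in> {0..}")
      case True
      then have x: "x > 0" "x \<notin> Z" "f x 0 \<le> M0" using elim by auto
      have "ennreal (Dp x t) * indicator {0..} x \<le> (\<integral>\<^sup>+\<tau>. (ennreal (4*b0^2*(Nn \<tau>)^2) * ennreal (Dp x \<tau>) + ennreal (4*b0^2) * Kc x \<tau>) * indicator {0..t} \<tau> \<partial>lborel) * indicator {0..} x"
        using Dp_bound[OF x t] True by simp
      also have "\<dots> = (\<integral>\<^sup>+\<tau>. G x \<tau> \<partial>lborel)"
        unfolding G_def by (rule nn_integral_multc[symmetric]) measurable
      finally show ?thesis .
    qed simp
  qed
  have "Ep t \<le> (\<integral>\<^sup>+x. \<integral>\<^sup>+\<tau>. G x \<tau> \<partial>lborel \<partial>lborel)"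
    unfolding Ep_def by (rule nn_integral_mono_AE[OF ae])
  also have "\<dots> = (\<integral>\<^sup>+\<tau>. \<integral>\<^sup>+x. G x \<tau> \<partial>lborel \<partial>lborel)"
    by (rule lborel_pair.Fubini'[OF Gm, symmetric])
  also have "\<dots> \<le> (\<integral>\<^sup>+\<tau>. ennreal (8*b0^2*(Nn \<tau>)^2) * Ep \<tau> * indicator {0..t} \<tau> \<partial>lborel)"
  proof (intro nn_integral_mono)
    fix \<tau> :: real
    show "(\<integral>\<^sup>+x. G x \<tau> \<partial>lborel) \<le> ennreal (8*b0^2*(Nn \<tau>)^2) * Ep \<tau> * indicator {0..t} \<tau>"
    proof (cases "\<tau> \<in> {0..t}")
      case True
      then have t0: "\<tau> \<ge> 0" by auto
      have "(\<integral>\<^sup>+x. G x \<tau> \<partial>lborel) = (\<integral>\<^sup>+x. ennreal (4*b0^2*(Nn \<tau>)^2) * (ennreal (Dp x \<tau>) * indicator {0..} x) + ennreal (4*b0^2) * (Kc x \<tau> * indicator {0..} x) \<partial>lborel)"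
        unfolding G_def using True by (intro nn_integral_cong) (simp add: distrib_right mult.assoc)
      also have "\<dots> = (\<integral>\<^sup>+x. ennreal (4*b0^2*(Nn \<tau>)^2) * (ennreal (Dp x \<tau>) * indicator {0..} x) \<partial>lborel) + (\<integral>\<^sup>+x. ennreal (4*b0^2) * (Kc x \<tau> * indicator {0..} x) \<partial>lborel)"
        by (rule nn_integral_add) measurable
      also have "\<dots> = ennreal (4*b0^2*(Nn \<tau>)^2) * Ep \<tau> + ennreal (4*b0^2) * (\<integral>\<^sup>+x. Kc x \<tau> * indicator {0..} x \<partial>lborel)"
        unfolding Ep_def by (simp add: nn_integral_cmult)
      also have "\<dots> \<le> ennreal (4*b0^2*(Nn \<tau>)^2) * Ep \<tau> + ennreal (4*b0^2) * (ennreal ((Nn \<tau>)^2) * Ep \<tau>)"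
        by (intro add_left_mono mult_left_mono KE[OF t0]) simp
      also have "\<dots> = ennreal (8*b0^2*(Nn \<tau>)^2) * Ep \<tau>"
      proof -
        have "ennreal (4*b0^2) * (ennreal ((Nn \<tau>)^2) * Ep \<tau>) = ennreal (4*b0^2*(Nn \<tau>)^2) * Ep \<tau>"
          by (simp add: ennreal_mult mult.assoc)
        moreover have "ennreal (4*b0^2*(Nn \<tau>)^2) * Ep \<tau> + ennreal (4*b0^2*(Nn \<tau>)^2) * Ep \<tau> = ennreal (8*b0^2*(Nn \<tau>)^2) * Ep \<tau>"
          by (simp add: distrib_right[symmetric] ennreal_plus[symmetric])
        ultimately show ?thesis by simp
      qed
      finally show ?thesis using True by simp
    next
      case False
      then show ?thesis unfolding G_def by simp
    qed
  qed
  finally show ?thesis .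
qed


lemma Ep_le_Nn:
  assumes t: "\<tau> \<ge> 0"
  shows "Ep \<tau> \<le> ennreal (Nn \<tau>)"
proof -
  have "Ep \<tau> \<le> (\<integral>\<^sup>+x. ennreal (f x \<tau>) * indicator {0..} x \<partial>lborel)"
    unfolding Ep_def
  proof (intro nn_integral_mono)
    fix x :: real
    show "ennreal (Dp x \<tau>) * indicator {0..} x \<le> ennreal (f x \<tau>) * indicator {0..} x"
    proof (cases "x \<ge> 0")
      case True
      have "Dp x \<tau> \<le> f x \<tau>" unfolding Dp_def using fnn True t Lm_nonneg[OF t] by auto
      then show ?thesis using True by (simp add: ennreal_leI)
    qed simp
  qed
  also have "\<dots> = ennreal (Nn \<tau>)" by (rule Nn_nn_integral[OF t])
  finally show ?thesis .
qed

lemma main_bound: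
  assumes T: "T \<ge> 0"
  shows "AE x in lborel. x \<ge> 0 \<longrightarrow> f x T \<le> Lm T"
proof -
  obtain s where s: "s \<in> {0..T}" "\<forall>\<tau>\<in>{0..T}. Nn \<tau> \<le> Nn s"
    using continuous_attains_sup[of "{0..T}" Nn] continuous_on_subset[OF Nn_cont, of "{0..T}"] T by auto
  define B where "B = Nn s"
  have B0: "0 \<le> B" unfolding B_def by (rule Nn_nonneg)
  have EB: "\<forall>t\<in>{0..T}. Ep t \<le> ennreal B"
  proof
    fix t assume t: "t \<in> {0..T}"
    have "Ep t \<le> ennreal (Nn t)" using Ep_le_Nn t by auto
    also have "\<dots> \<le> ennreal B" unfolding B_def using s t by (intro ennreal_leI) auto
    finally show "Ep t \<le> ennreal B" .
  qed
  have rec: "\<forall>t\<in>{0..T}. Ep t \<le> (\<integral>\<^sup>+\<tau>. ennreal (8*b0^2*B^2) * Ep \<tau> * indicator {0..t} \<tau> \<partial>lborel)"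
  proof
    fix t assume t: "t \<in> {0..T}"
    have "Ep t \<le> (\<integral>\<^sup>+\<tau>. ennreal (8*b0^2*(Nn \<tau>)^2) * Ep \<tau> * indicator {0..t} \<tau> \<partial>lborel)"
      using E_bound t by auto
    also have "\<dots> \<le> (\<integral>\<^sup>+\<tau>. ennreal (8*b0^2*B^2) * Ep \<tau> * indicator {0..t} \<tau> \<partial>lborel)"
    proof (intro nn_integral_mono)
      fix \<tau> :: real
      show "ennreal (8*b0^2*(Nn \<tau>)^2) * Ep \<tau> * indicator {0..t} \<tau> \<le> ennreal (8*b0^2*B^2) * Ep \<tau> * indicator {0..t} \<tau>"
      proof (cases "\<tau> \<in> {0..t}")
        case True
        then have "\<tau> \<in> {0..T}" using t by auto
        then have "Nn \<tau> \<le> B" using s unfolding B_def by auto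
        then have "(Nn \<tau>)^2 \<le> B^2" using Nn_nonneg by (intro power_mono) auto
        then have "8*b0^2*(Nn \<tau>)^2 \<le> 8*b0^2*B^2" by (intro mult_left_mono) auto
        then have "ennreal (8*b0^2*(Nn \<tau>)^2) \<le> ennreal (8*b0^2*B^2)" by (rule ennreal_leI)
        then show ?thesis by (intro mult_right_mono) auto
      qed simp
    qed
    finally show "Ep t \<le> (\<integral>\<^sup>+\<tau>. ennreal (8*b0^2*B^2) * Ep \<tau> * indicator {0..t} \<tau> \<partial>lborel)" .
  qed
  have "\<forall>t\<in>{0..T}. Ep t = 0"
    by (rule gronwall_enn[OF EB B0 _ rec]) simp
  then have "Ep T = 0" using T by auto
  then have "AE x in lborel. ennreal (Dp x T) * indicator {0..} x = 0"
    unfolding Ep_def by (subst (asm) nn_integral_0_iff_AE) measurable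
  then show ?thesis
  proof eventually_elim
    case (elim x)
    show ?case
    proof
      assume "x \<ge> 0"
      then have "ennreal (Dp x T) = 0" using elim by simp
      then have "Dp x T = 0" using Dp_nonneg[of x T] by simp
      then show "f x T \<le> Lm T" unfolding Dp_def by (simp add: max_def split: if_splits)
    qed
  qed
qed


lemma main_bound':
  assumes T: "T \<ge> 0"
  shows "AE x in lborel. x \<ge> 0 \<longrightarrow> f x T \<le> (1+M0) * exp (8*b0^2 * (LINT \<tau>:{0..T}|lborel. (L1norm (\<lambda>x. f x \<tau>))^2)) - 1"
  using main_bound[OF T] unfolding Lm_def Sx_def Nn_def .

end


lemma L1norm_cont:
  assumes fc: "C_L1 f"
  shows "continuous_on {0..} (\<lambda>t. L1norm (\<lambda>x. f x t))"
proof -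
  have fi: "\<forall>t\<ge>0. set_integrable lborel {0..} (\<lambda>x. f x t)"
    and fl: "\<forall>t\<ge>0. ((\<lambda>s. LINT x:{0..}|lborel. \<bar>f x s - f x t\<bar>) \<longlongrightarrow> 0) (at t within {0..})"
    using fc unfolding C_L1_def by auto
  have bnd: "\<bar>L1norm (\<lambda>x. f x s) - L1norm (\<lambda>x. f x t)\<bar> \<le> (LINT x:{0..}|lborel. \<bar>f x s - f x t\<bar>)"
    if s: "s \<ge> 0" and t: "t \<ge> 0" for s t
  proof -
    have is1: "set_integrable lborel {0..} (\<lambda>x. \<bar>f x s\<bar>)" using fi s by (auto intro: set_integrable_abs)
    have is2: "set_integrable lborel {0..} (\<lambda>x. \<bar>f x t\<bar>)" using fi t by (auto intro: set_integrable_abs)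
    have is3: "set_integrable lborel {0..} (\<lambda>x. \<bar>f x s - f x t\<bar>)"
      using fi s t by (auto intro!: set_integrable_abs set_integral_diff(1))
    have is4: "set_integrable lborel {0..} (\<lambda>x. \<bar>f x s\<bar> - \<bar>f x t\<bar>)"
      using is1 is2 by (rule set_integral_diff(1))
    have "L1norm (\<lambda>x. f x s) - L1norm (\<lambda>x. f x t) = (LINT x:{0..}|lborel. \<bar>f x s\<bar> - \<bar>f x t\<bar>)"
      unfolding L1norm_def using is1 is2 by (simp add: set_integral_diff)
    then have "\<bar>L1norm (\<lambda>x. f x s) - L1norm (\<lambda>x. f x t)\<bar> \<le> (LINT x:{0..}|lborel. \<bar>\<bar>f x s\<bar> - \<bar>f x t\<bar>\<bar>)"
      using set_integral_norm_bound[OF is4] by (simp only: real_norm_def)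
    also have "\<dots> \<le> (LINT x:{0..}|lborel. \<bar>f x s - f x t\<bar>)"
      by (rule set_integral_mono[OF set_integrable_abs[OF is4] is3]) (rule abs_triangle_ineq3)
    finally show ?thesis .
  qed
  show ?thesis
    unfolding continuous_on_def
  proof
    fix t :: real assume t: "t \<in> {0..}"
    have "((\<lambda>s. L1norm (\<lambda>x. f x s) - L1norm (\<lambda>x. f x t)) \<longlongrightarrow> 0) (at t within {0..})"
    proof (rule Lim_null_comparison)
      show "\<forall>\<^sub>F s in at t within {0..}. norm (L1norm (\<lambda>x. f x s) - L1norm (\<lambda>x. f x t)) \<le> (LINT x:{0..}|lborel. \<bar>f x s - f x t\<bar>)"
        unfolding eventually_at_filter using bnd t by (auto intro!: always_eventually)
      show "((\<lambda>s. LINT x:{0..}|lborel. \<bar>f x s - f x t\<bar>) \<longlongrightarrow> 0) (at t within {0..})"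
        using fl t by auto
    qed
    then show "((\<lambda>s. L1norm (\<lambda>x. f x s)) \<longlongrightarrow> L1norm (\<lambda>x. f x t)) (at t within {0..})"
      by (simp add: LIM_zero_iff)
  qed
qed

lemma restrict_pos: "emeasure (restrict_space lborel {0::real..}) (space (restrict_space lborel {0::real..})) \<noteq> 0"
proof -
  have "emeasure (restrict_space lborel {0::real..}) (space (restrict_space lborel {0::real..})) = emeasure lborel {0::real..}"
    by (subst emeasure_restrict_space) auto
  moreover have "emeasure lborel {0::real..1} \<le> emeasure lborel {0::real..}"
    by (rule emeasure_mono) auto
  ultimately show ?thesis by auto
qed

theorem proposition4p3:
  fixes ph :: "real \<Rightarrow> real" and b0 \<eta> :: real
    and f0 :: "real \<Rightarrow> real" and f :: "real \<Rightarrow> real \<Rightarrow> real"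
  assumes kernel: "kernel_assumption ph b0 \<eta>"
    and eta: "\<eta> \<ge> 3/2"
    and f0_nonneg: "\<forall>x\<ge>0. f0 x \<ge> 0"
    and f0_L1: "set_integrable lborel {0..} f0"
    and f0_mass_energy: "(\<integral>\<^sup>+ x\<in>{0..}. ennreal ((1 + x) * f0 x * sqrt x) \<partial>lborel) < \<infinity>"
    and f_cont: "C_L1 f"
    and f_mild: "mild_solution ph f"
    and f_cons: "conservative f"
    and f_init: "\<forall>x\<ge>0. f x 0 = f0 x"
    and f_unique: "\<forall>g. C_L1 g \<and> mild_solution ph g \<and> conservative g \<and> (\<forall>x\<ge>0. g x 0 = f0 x)
                      \<longrightarrow> (\<forall>t\<ge>0. AE x in lborel. x \<ge> 0 \<longrightarrow> g x t = f x t)"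
    and f0_Linf: "Linfnorm f0 < \<infinity>"
  shows "\<forall>t\<ge>0. Linfnorm (\<lambda>x. f x t) < \<infinity> \<and>
           Linfnorm (\<lambda>x. f x t) \<le>
             (1 + Linfnorm f0) * ereal (exp (8 * b0^2 * (LINT \<tau>:{0..t}|lborel. (L1norm (\<lambda>x. f x \<tau>))^2)))"
proof -
  have phb: "\<forall>r\<ge>0. 0 \<le> ph r \<and> ph r \<le> b0" using ph_bound[OF kernel] by blast
  note md = f_mild[unfolded mild_solution_def]
  have fnn: "\<forall>x\<ge>0. \<forall>t\<ge>0. 0 \<le> f x t" using md by blast
  have fmeas: "(\<lambda>p. f (fst p) (snd p)) \<in> borel_measurable (lborel :: (real \<times> real) measure)"
    using md by blast
  have fm: "case_prod f \<in> borel_measurable (lborel \<Otimes>\<^sub>M lborel)"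
    using fmeas unfolding lborel_prod by (simp add: case_prod_beta')
  note fm[measurable]
  from md obtain Z where Z: "Z \<in> null_sets lborel" and H: "\<forall>x\<in>{0..} - Z. \<forall>t\<ge>0.
           (\<integral>\<^sup>+ \<tau>\<in>{0..t}.
              (\<integral>\<^sup>+ p\<in>{0..}\<times>{0..}.
                 ennreal (W ph x (fst p) (snd p) *
                          (gain f x (fst p) (snd p) \<tau> + loss f x (fst p) (snd p) \<tau>)
                          * sqrt (fst p) * sqrt (snd p)) \<partial>(lborel \<Otimes>\<^sub>M lborel)) \<partial>lborel) < \<infinity>
           \<and> f x t = f x 0 + (LINT \<tau>:{0..t}|lborel. Qcoll ph f x \<tau>)"
    by blast
  have Zeq: "\<forall>x\<in>{0..} - Z. \<forall>t\<ge>0. f x t = f x 0 + (LINT \<tau>:{0..t}|lborel. Qcoll ph f x \<tau>)"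
  proof (intro ballI allI impI)
    fix x t assume xz: "x \<in> {0..} - Z" and t0: "(0::real) \<le> t"
    from bspec[OF H xz, THEN spec, THEN mp, OF t0]
    show "f x t = f x 0 + (LINT \<tau>:{0..t}|lborel. Qcoll ph f x \<tau>)" by (rule conjunct2)
  qed
  have fint: "\<forall>t\<ge>0. set_integrable lborel {0..} (\<lambda>x. f x t)"
    using f_cont unfolding C_L1_def by blast
  have Ncont: "continuous_on {0..} (\<lambda>t. L1norm (\<lambda>x. f x t))"
    by (rule L1norm_cont[OF f_cont])
  let ?R = "restrict_space lborel {0::real..}"
  have f0m: "(\<lambda>x. ereal \<bar>f0 x\<bar>) \<in> borel_measurable ?R"
  proof -
    have [measurable]: "(\<lambda>x. f x 0) \<in> borel_measurable borel" by measurable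
    have m1: "(\<lambda>x. ereal \<bar>f x 0\<bar>) \<in> borel_measurable ?R"
      by (intro measurable_restrict_space1) measurable
    have eq: "\<And>x. x \<in> space ?R \<Longrightarrow> ereal \<bar>f x 0\<bar> = ereal \<bar>f0 x\<bar>"
    proof -
      fix x assume "x \<in> space ?R"
      then have "x \<ge> 0" by simp
      then show "ereal \<bar>f x 0\<bar> = ereal \<bar>f0 x\<bar>" using f_init by simp
    qed
    show ?thesis by (rule measurable_cong[THEN iffD1, OF eq m1])
  qed
  have L0: "0 \<le> Linfnorm f0"
  proof -
    have "esssup ?R (\<lambda>x. 0 :: ereal) \<le> esssup ?R (\<lambda>x. ereal \<bar>f0 x\<bar>)"
      by (rule esssup_mono) auto
    moreover have "esssup ?R (\<lambda>x. 0 :: ereal) = 0" by (rule esssup_const[OF restrict_pos])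
    ultimately show ?thesis unfolding Linfnorm_def by simp
  qed
  define M0 where "M0 = real_of_ereal (Linfnorm f0)"
  have LM0: "Linfnorm f0 = ereal M0"
  proof -
    have "\<bar>Linfnorm f0\<bar> \<noteq> \<infinity>" using L0 f0_Linf by auto
    then show ?thesis unfolding M0_def by (rule ereal_real'[symmetric])
  qed
  have M0: "0 \<le> M0" using L0 unfolding LM0 by simp
  have f0b: "AE x in lborel. x \<ge> 0 \<longrightarrow> f x 0 \<le> M0"
  proof -
    have "AE x in ?R. ereal \<bar>f0 x\<bar> \<le> Linfnorm f0" unfolding Linfnorm_def by (rule esssup_AE)
    then have "AE x in ?R. ereal \<bar>f0 x\<bar> \<le> ereal M0" unfolding LM0 .
    then have "AE x in lborel. x \<in> {0..} \<longrightarrow> ereal \<bar>f0 x\<bar> \<le> ereal M0"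
      by (subst (asm) AE_restrict_space_iff) auto
    then show ?thesis
    proof (rule eventually_mono)
      fix x :: real assume h: "x \<in> {0..} \<longrightarrow> ereal \<bar>f0 x\<bar> \<le> ereal M0"
      show "x \<ge> 0 \<longrightarrow> f x 0 \<le> M0"
      proof
        assume x: "x \<ge> 0"
        then have "\<bar>f0 x\<bar> \<le> M0" using h by simp
        moreover have "f x 0 = f0 x" using f_init x by simp
        ultimately show "f x 0 \<le> M0" by simp
      qed
    qed
  qed
  show ?thesis
  proof (intro allI impI)
    fix t :: real assume t: "t \<ge> 0"
    define Lt where "Lt = (1+M0) * exp (8*b0^2 * (LINT \<tau>:{0..t}|lborel. (L1norm (\<lambda>x. f x \<tau>))^2)) - 1"
    have ae: "AE x in lborel. x \<ge> 0 \<longrightarrow> f x t \<le> Lt"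
      using main_bound'[OF phb fm fnn fint Ncont M0 f0b Z Zeq t]
      unfolding Lt_def .
    have ftm: "(\<lambda>x. ereal \<bar>f x t\<bar>) \<in> borel_measurable ?R"
    proof -
      have [measurable]: "(\<lambda>x. f x t) \<in> borel_measurable borel" by measurable
      then show ?thesis by (intro measurable_restrict_space1) measurable
    qed
    have "AE x in ?R. ereal \<bar>f x t\<bar> \<le> ereal Lt"
      by (subst AE_restrict_space_iff) (use ae fnn t in \<open>auto elim!: eventually_mono\<close>)
    then have le: "Linfnorm (\<lambda>x. f x t) \<le> ereal Lt"
      unfolding Linfnorm_def by (rule esssup_I[OF ftm])
    have "ereal Lt \<le> (1 + Linfnorm f0) * ereal (exp (8 * b0^2 * (LINT \<tau>:{0..t}|lborel. (L1norm (\<lambda>x. f x \<tau>))^2)))"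
      unfolding LM0 Lt_def by (simp add: add.commute)
    with le show "Linfnorm (\<lambda>x. f x t) < \<infinity> \<and>
           Linfnorm (\<lambda>x. f x t) \<le>
             (1 + Linfnorm f0) * ereal (exp (8 * b0^2 * (LINT \<tau>:{0..t}|lborel. (L1norm (\<lambda>x. f x \<tau>))^2)))"
      by (auto intro: order.trans le_less_trans)
  qed
qed


end
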